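(* Let $q$ be a prime power and let $t$ be a positive integer with $t\mid q-1$. Let $\mathbb{F}=\mathrm{GF}(q^2)$ and let $H\subseteq\mathbb{F}^\ast$ be the subgroup of the multiplicative group of order $t(q+1)$. Let $G(q^2,t(q+1))$ be the graph whose vertex set is $(\mathbb{F}\times\mathbb{F}\setminus\{(0,0)\})/\sim$, where $(a_1,b_1)\sim(a_2,b_2)$ iff there is $h\in H$ with $a_1=ha_2$ and $b_1=hb_2$, and in which two distinct vertices $\langle a,b\rangle$ and $\langle x,y\rangle$ are adjacent iff $ax+by\in H$. Then $G(q^2,t(q+1))$ is $K_{3,2t^2+1}$-free.
   Context: $\langle a,b\rangle$ denotes the equivalence class of $(a,b)$; adjacency is independent of representatives; the graph is simple (no loops). A graph is $K_{s,u}$-free if it contains no (not necessarily induced) subgraph isomorphic to the complete bipartite graph $K_{s,u}$. *)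

theory Defs
  imports "HOL-Computational_Algebra.Primes"
begin

definition Hrel :: "'a::field set \<Rightarrow> (('a \<times> 'a) \<times> ('a \<times> 'a)) set" where
  "Hrel H = {((a1, b1), (a2, b2)). \<exists>h\<in>H. a1 = h * a2 \<and> b1 = h * b2}"

definition G_vertices :: "'a::field set \<Rightarrow> ('a \<times> 'a) set set" where
  "G_vertices H = (UNIV - {(0, 0)}) // Hrel H"

definition G_adj :: "'a::field set \<Rightarrow> ('a \<times> 'a) set \<Rightarrow> ('a \<times> 'a) set \<Rightarrow> bool" where
  "G_adj H u v = (u \<noteq> v \<and> (\<exists>(a, b)\<in>u. \<exists>(x, y)\<in>v. a * x + b * y \<in> H))"

definition K_free :: "'v set \<Rightarrow> ('v \<Rightarrow> 'v \<Rightarrow> bool) \<Rightarrow> nat \<Rightarrow> nat \<Rightarrow> bool" where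
  "K_free V E s u = (\<not> (\<exists>S U. S \<subseteq> V \<and> U \<subseteq> V \<and> S \<inter> U = {} \<and> finite S \<and> finite U \<and>
       card S = s \<and> card U = u \<and> (\<forall>x\<in>S. \<forall>y\<in>U. E x y)))"

end

theory Submission
  imports Defs "HOL-Number_Theory.Residues" "HOL-Computational_Algebra.Polynomial"
begin

lemma frob_char:
  fixes q :: nat
  assumes q_pp: "\<exists>p k. prime p \<and> k \<ge> 1 \<and> q = p ^ k"
    and card_F: "card (UNIV :: 'a::{field,finite} set) = q ^ 2"
  shows "\<And>x y :: 'a. (x + y) ^ q = x ^ q + y ^ q"
proof -
  fix x y :: 'a
  obtain p k where pk: "prime p" "k \<ge> 1" "q = p ^ k" using q_pp by blast
  have cpos: "CHAR('a) > 0" by (rule finite_imp_CHAR_pos) simp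
  have cpr: "prime CHAR('a)" using prime_CHAR_semidom[OF cpos] .
  have "CHAR('a) dvd p ^ (k*2)" using CHAR_dvd_CARD[where 'a='a] card_F pk
    by (simp add: power_mult)
  hence "CHAR('a) dvd p" using cpr prime_dvd_power by blast
  hence "CHAR('a) = p" using cpr pk(1) by (simp add: primes_dvd_imp_eq)
  thus "(x + y) ^ q = x ^ q + y ^ q"
    using freshmans_dream'[OF cpr, of q k] pk by simp
qed

lemma H_pow:
  fixes H :: "'a::{field,finite} set"
  assumes H_sub: "H \<subseteq> UNIV - {0}"
    and H_mult: "\<And>x y. x \<in> H \<Longrightarrow> y \<in> H \<Longrightarrow> x * y \<in> H"
    and h: "h \<in> H"
  shows "h ^ card H = 1"
proof -
  have fin: "finite H" by simp
  have inj: "inj_on (\<lambda>x. h * x) H" using h H_sub by (auto simp: inj_on_def)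
  have sub: "(\<lambda>x. h * x) ` H \<subseteq> H" using H_mult h by auto
  have img: "(\<lambda>x. h * x) ` H = H"
    using card_image[OF inj] sub fin by (simp add: card_subset_eq)
  have "prod (\<lambda>x. x) H = prod (\<lambda>x. x) ((\<lambda>x. h * x) ` H)" using img by simp
  also have "\<dots> = prod (\<lambda>x. h * x) H" using prod.reindex[OF inj] by simp
  also have "\<dots> = h ^ card H * prod (\<lambda>x. x) H" by (simp add: prod.distrib)
  finally have "prod (\<lambda>x. x) H * 1 = prod (\<lambda>x. x) H * h ^ card H" by (simp add: mult.commute)
  moreover have "prod (\<lambda>x. x) H \<noteq> 0" using H_sub fin by auto
  ultimately show ?thesis by (metis mult_left_cancel)
qed

lemma quad_bound:
  fixes A B C :: "'a::field"
  assumes "A \<noteq> 0"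
  shows "card {h. A * h^2 + B * h + C = 0} \<le> 2"
proof -
  have "card {h. poly [:C, B, A:] h = 0} \<le> degree [:C, B, A:]"
    by (rule card_poly_roots_bound) (use assms in auto)
  moreover have "{h. poly [:C, B, A:] h = 0} = {h. A * h^2 + B * h + C = 0}"
    by (auto simp: algebra_simps power2_eq_square)
  ultimately show ?thesis using assms by simp
qed

lemma unity_bound:
  fixes t :: nat
  assumes "t > 0"
  shows "card {w :: 'a::field. w ^ t = 1} \<le> t"
proof -
  have d: "degree (monom (1::'a) t + [:-1:]) = t" using assms
    by (subst degree_add_eq_left) (auto simp: degree_monom_eq)
  have "monom (1::'a) t + [:-1:] \<noteq> 0" using d assms by auto
  hence "card {w. poly (monom (1::'a) t + [:-1:]) w = 0} \<le> t"
    using card_poly_roots_bound d by metis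
  moreover have "{w. poly (monom (1::'a) t + [:-1:]) w = 0} = {w. w ^ t = 1}"
    by (auto simp: poly_monom)
  ultimately show ?thesis by simp
qed


lemma piece_bound:
  fixes q :: nat and \<alpha> \<beta> n1 n2 :: "'a::{field,finite}"
  assumes frob: "\<And>x y :: 'a. (x + y) ^ q = x ^ q + y ^ q"
    and a0: "\<alpha> \<noteq> 0" and b0: "\<beta> \<noteq> 0" and n0: "n1 \<noteq> 0"
  shows "card {h. h ^ (q+1) = n1 \<and> (\<alpha> + \<beta> * h) ^ (q+1) = n2} \<le> 2"
proof -
  let ?A = "\<alpha> ^ q * \<beta>" and ?B = "\<alpha> ^ (q+1) + \<beta> ^ (q+1) * n1 - n2" and ?C = "\<beta> ^ q * n1 * \<alpha>"
  have "{h. h ^ (q+1) = n1 \<and> (\<alpha> + \<beta> * h) ^ (q+1) = n2} \<subseteq> {h. ?A * h^2 + ?B * h + ?C = 0}"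
  proof
    fix h assume "h \<in> {h. h ^ (q+1) = n1 \<and> (\<alpha> + \<beta> * h) ^ (q+1) = n2}"
    hence h1: "h ^ (q+1) = n1" and h2: "(\<alpha> + \<beta> * h) ^ (q+1) = n2" by auto
    have hq: "h ^ q * h = n1" using h1 by (simp add: mult.commute)
    have f: "(\<alpha> + \<beta> * h) ^ q = \<alpha> ^ q + \<beta> ^ q * h ^ q"
      by (simp add: frob power_mult_distrib)
    have e: "n2 = (\<alpha> ^ q + \<beta> ^ q * h ^ q) * (\<alpha> + \<beta> * h)" using h2 f
      by (metis power_Suc mult.commute Suc_eq_plus1)
    have "n2 * h = (\<alpha> ^ q * h + \<beta> ^ q * (h ^ q * h)) * (\<alpha> + \<beta> * h)"
      unfolding e by (simp add: algebra_simps)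
    hence "n2 * h = (\<alpha> ^ q * h + \<beta> ^ q * n1) * (\<alpha> + \<beta> * h)" using hq by simp
    hence "?A * h^2 + ?B * h + ?C = 0"
      by (simp add: algebra_simps power2_eq_square)
    thus "h \<in> {h. ?A * h^2 + ?B * h + ?C = 0}" by simp
  qed
  hence "card {h. h ^ (q+1) = n1 \<and> (\<alpha> + \<beta> * h) ^ (q+1) = n2} \<le> card {h. ?A * h^2 + ?B * h + ?C = 0}"
    by (intro card_mono) (auto intro: finite_subset)
  also have "\<dots> \<le> 2" by (rule quad_bound) (use a0 b0 in auto)
  finally show ?thesis .
qed


lemma count_bound:
  fixes q t :: nat and H :: "'a::{field,finite} set" and \<alpha> \<beta> :: 'a
  assumes frob: "\<And>x y :: 'a. (x + y) ^ q = x ^ q + y ^ q"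
    and H_sub: "H \<subseteq> UNIV - {0}"
    and H_mult: "\<And>x y. x \<in> H \<Longrightarrow> y \<in> H \<Longrightarrow> x * y \<in> H"
    and H_card: "card H = t * (q + 1)"
    and t_pos: "t > 0" and a0: "\<alpha> \<noteq> 0" and b0: "\<beta> \<noteq> 0"
  shows "card {h \<in> H. \<alpha> + \<beta> * h \<in> H} \<le> 2 * t ^ 2"
proof -
  define T where "T = {w :: 'a. w ^ t = 1}"
  define P where "P = (\<lambda>(n1, n2). {h :: 'a. h ^ (q+1) = n1 \<and> (\<alpha> + \<beta> * h) ^ (q+1) = n2})"
  have inT: "x ^ (q+1) \<in> T" if "x \<in> H" for x
  proof -
    have "x ^ card H = 1" using H_pow[OF H_sub H_mult that] .
    hence "(x ^ (q+1)) ^ t = 1" using H_card by (metis power_mult mult.commute)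
    thus ?thesis by (simp add: T_def)
  qed
  have sub: "{h \<in> H. \<alpha> + \<beta> * h \<in> H} \<subseteq> (\<Union>n\<in>T \<times> T. P n)"
  proof
    fix h assume "h \<in> {h \<in> H. \<alpha> + \<beta> * h \<in> H}"
    hence "h ^ (q+1) \<in> T" "(\<alpha> + \<beta> * h) ^ (q+1) \<in> T" using inT by auto
    thus "h \<in> (\<Union>n\<in>T \<times> T. P n)"
      by (intro UN_I[of "(h ^ (q+1), (\<alpha> + \<beta> * h) ^ (q+1))"]) (auto simp: P_def)
  qed
  have Pb: "card (P n) \<le> 2" if "n \<in> T \<times> T" for n
  proof -
    obtain n1 n2 where n: "n = (n1, n2)" by fastforce
    have "n1 \<noteq> 0" using that t_pos by (auto simp: n T_def power_0_left)
    thus ?thesis unfolding n P_def using piece_bound[OF frob a0 b0] by simp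
  qed
  have cT: "card T \<le> t" unfolding T_def by (rule unity_bound[OF t_pos])
  have "card {h \<in> H. \<alpha> + \<beta> * h \<in> H} \<le> card (\<Union>n\<in>T \<times> T. P n)"
    by (rule card_mono[OF _ sub]) simp
  also have "\<dots> \<le> (\<Sum>n\<in>T \<times> T. card (P n))" by (rule card_UN_le) simp
  also have "\<dots> \<le> (\<Sum>n\<in>T \<times> T. 2)" by (rule sum_mono) (rule Pb)
  also have "\<dots> = 2 * (card T * card T)" by (simp add: card_cartesian_product)
  also have "\<dots> \<le> 2 * (t * t)" using cT by (intro mult_le_mono2 mult_le_mono) auto
  finally show ?thesis by (simp add: power2_eq_square)
qed


definition Hcls :: "'a::field set \<Rightarrow> 'a \<times> 'a \<Rightarrow> ('a \<times> 'a) set" where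
  "Hcls H p = {(h * fst p, h * snd p) | h. h \<in> H}"

definition bil :: "'a::field \<times> 'a \<Rightarrow> 'a \<times> 'a \<Rightarrow> 'a" where
  "bil p r = fst p * fst r + snd p * snd r"

lemma lin_zero:
  fixes a1 b1 a2 b2 u w :: "'a::field"
  assumes "a1 * u + b1 * w = 0" "a2 * u + b2 * w = 0" "a1 * b2 \<noteq> a2 * b1"
  shows "u = 0 \<and> w = 0"
proof -
  have "u * (a1 * b2 - a2 * b1) = b2 * (a1 * u + b1 * w) - b1 * (a2 * u + b2 * w)"
    by (simp add: algebra_simps)
  hence u: "u = 0" using assms by simp
  have "w * (a1 * b2 - a2 * b1) = a1 * (a2 * u + b2 * w) - a2 * (a1 * u + b1 * w)"
    by (simp add: algebra_simps)
  hence "w = 0" using assms by simp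
  with u show ?thesis by simp
qed

lemma dep:
  fixes p p' :: "'a::field \<times> 'a"
  assumes "p \<noteq> (0, 0)" "fst p * snd p' = fst p' * snd p"
  shows "\<exists>l. p' = (l * fst p, l * snd p)"
proof (cases "fst p = 0")
  case True
  hence "snd p \<noteq> 0" using assms(1) by (cases p) auto
  moreover have "fst p' = 0" using assms(2) True calculation by simp
  ultimately show ?thesis using True
    by (intro exI[of _ "snd p' / snd p"]) (cases p', cases p, auto)
next
  case False
  have "snd p' = fst p' / fst p * snd p" using assms(2) False
    by (simp add: field_simps)
  thus ?thesis using False
    by (intro exI[of _ "fst p' / fst p"]) (cases p', cases p, auto)
qed

locale Hgrp =
  fixes H :: "'a::field set"
  assumes H_sub: "H \<subseteq> UNIV - {0}"
    and H_one: "1 \<in> H"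
    and H_mult: "\<And>x y. x \<in> H \<Longrightarrow> y \<in> H \<Longrightarrow> x * y \<in> H"
    and H_inv: "\<And>x. x \<in> H \<Longrightarrow> inverse x \<in> H"
begin

lemma H_nz: "x \<in> H \<Longrightarrow> x \<noteq> 0" using H_sub by auto

lemma Hrel_img: "Hrel H `` {p} = Hcls H p"
proof (rule Set.set_eqI)
  fix x :: "'a \<times> 'a"
  obtain a b where x: "x = (a, b)" by fastforce
  obtain p1 p2 where p: "p = (p1, p2)" by fastforce
  have "(a, b) \<in> Hcls H p" if asm: "(a, b) \<in> Hrel H `` {p}"
  proof -
    obtain h where h: "h \<in> H" "fst p = h * a" "snd p = h * b"
      using asm by (auto simp: Hrel_def p)
    hence "a = inverse h * fst p" "b = inverse h * snd p" using H_nz[OF h(1)] by auto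
    thus "(a, b) \<in> Hcls H p" using H_inv[OF h(1)] by (auto simp: Hcls_def)
  qed
  moreover have "(a, b) \<in> Hrel H `` {p}" if asm: "(a, b) \<in> Hcls H p"
  proof -
    obtain h where h: "h \<in> H" "a = h * fst p" "b = h * snd p" using asm by (auto simp: Hcls_def)
    hence "fst p = inverse h * a" "snd p = inverse h * b" using H_nz[OF h(1)] by auto
    thus "(a, b) \<in> Hrel H `` {p}" using H_inv[OF h(1)] by (auto simp: Hrel_def p)
  qed
  ultimately show "x \<in> Hrel H `` {p} \<longleftrightarrow> x \<in> Hcls H p" using x by blast
qed

lemma vert: "v \<in> G_vertices H \<Longrightarrow> \<exists>p. p \<noteq> (0, 0) \<and> v = Hcls H p"
  unfolding G_vertices_def quotient_def using Hrel_img by auto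

lemma self: "p \<in> Hcls H p"
  using H_one by (cases p) (force simp: Hcls_def)

lemma mem_Hcls: assumes "r \<in> Hcls H p" shows "Hcls H r = Hcls H p"
proof -
  obtain g where g: "g \<in> H" "r = (g * fst p, g * snd p)" using assms by (auto simp: Hcls_def)
  show ?thesis
  proof safe
    fix a b assume "(a, b) \<in> Hcls H r"
    then obtain h where "h \<in> H" "a = h * fst r" "b = h * snd r" by (auto simp: Hcls_def)
    thus "(a, b) \<in> Hcls H p" using g H_mult[of h g]
      by (auto simp: Hcls_def intro!: exI[of _ "h * g"])
  next
    fix a b assume "(a, b) \<in> Hcls H p"
    then obtain h where h: "h \<in> H" "a = h * fst p" "b = h * snd p" by (auto simp: Hcls_def)
    have "inverse g \<in> H" using H_inv g by auto
    hence "h * inverse g \<in> H" using H_mult h by auto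
    moreover have "a = (h * inverse g) * fst r" "b = (h * inverse g) * snd r"
      using h g H_nz[OF g(1)] by auto
    ultimately show "(a, b) \<in> Hcls H r" by (auto simp: Hcls_def)
  qed
qed

lemma adj:
  assumes "G_adj H (Hcls H p) (Hcls H r)" "u \<in> Hcls H p" "v \<in> Hcls H r"
  shows "bil u v \<in> H"
proof -
  obtain a b x y where "(a, b) \<in> Hcls H p" "(x, y) \<in> Hcls H r" and ab: "a * x + b * y \<in> H"
    using assms(1) by (auto simp: G_adj_def)
  then obtain g1 g2 where g: "g1 \<in> H" "g2 \<in> H" "a = g1 * fst p" "b = g1 * snd p"
     "x = g2 * fst r" "y = g2 * snd r" by (auto simp: Hcls_def)
  obtain g3 g4 where g': "g3 \<in> H" "g4 \<in> H" "u = (g3 * fst p, g3 * snd p)"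
     "v = (g4 * fst r, g4 * snd r)" using assms(2,3) by (auto simp: Hcls_def)
  have "bil u v = (g3 * g4 * inverse (g1 * g2)) * (a * x + b * y)"
    using g g' H_nz[OF g(1)] H_nz[OF g(2)] by (simp add: bil_def field_simps)
  moreover have "g3 * g4 * inverse (g1 * g2) \<in> H"
    using g g' H_mult H_inv by auto
  ultimately show ?thesis using ab H_mult by auto
qed

lemma indep:
  assumes "p \<noteq> (0, 0)" "Hcls H p \<noteq> Hcls H p'" "bil p r \<in> H" "bil p' r \<in> H"
  shows "fst p * snd p' \<noteq> fst p' * snd p"
proof
  assume "fst p * snd p' = fst p' * snd p"
  then obtain l where l: "p' = (l * fst p, l * snd p)" using dep assms(1) by blast
  have "bil p' r = l * bil p r" using l by (simp add: bil_def algebra_simps)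
  hence "l = bil p' r * inverse (bil p r)" using H_nz[OF assms(3)] by simp
  hence "l \<in> H" using assms H_mult H_inv by auto
  hence "p' \<in> Hcls H p" using l by (auto simp: Hcls_def)
  thus False using mem_Hcls assms(2) by metis
qed

lemma inj:
  assumes D: "fst p1 * snd p2 \<noteq> fst p2 * snd p1"
    and h1: "bil p1 r \<in> H" and h2: "bil p1 r' \<in> H"
    and eq: "bil p2 r / bil p1 r = bil p2 r' / bil p1 r'"
  shows "r' \<in> Hcls H r"
proof -
  define c where "c = bil p1 r' / bil p1 r"
  have cH: "c \<in> H" unfolding c_def using h1 h2 H_mult H_inv by (simp add: divide_inverse)
  have n1: "bil p1 r \<noteq> 0" "bil p1 r' \<noteq> 0" using H_nz h1 h2 by auto
  have e1: "bil p1 r' = c * bil p1 r" using n1 by (simp add: c_def)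
  have e2: "bil p2 r' = c * bil p2 r" using n1 eq by (simp add: c_def field_simps)
  have "fst p1 * (fst r' - c * fst r) + snd p1 * (snd r' - c * snd r) = 0"
    using e1 by (simp add: bil_def algebra_simps)
  moreover have "fst p2 * (fst r' - c * fst r) + snd p2 * (snd r' - c * snd r) = 0"
    using e2 by (simp add: bil_def algebra_simps)
  ultimately have "fst r' - c * fst r = 0 \<and> snd r' - c * snd r = 0"
    using lin_zero D by blast
  hence "r' = (c * fst r, c * snd r)" by (cases r') auto
  thus ?thesis using cH by (auto simp: Hcls_def)
qed

end


theorem theorem5:
  fixes q t :: nat and H :: "'a::{field, finite} set"
  assumes q_pp: "\<exists>p k. prime p \<and> k \<ge> 1 \<and> q = p ^ k"
    and card_F: "card (UNIV :: 'a set) = q ^ 2"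
    and t_pos: "t > 0"
    and t_dvd: "t dvd (q - 1)"
    and H_sub: "H \<subseteq> UNIV - {0}"
    and H_one: "1 \<in> H"
    and H_mult: "\<And>x y. x \<in> H \<Longrightarrow> y \<in> H \<Longrightarrow> x * y \<in> H"
    and H_inv: "\<And>x. x \<in> H \<Longrightarrow> inverse x \<in> H"
    and H_card: "card H = t * (q + 1)"
  shows "K_free (G_vertices H) (G_adj H) 3 (2 * t ^ 2 + 1)"
proof -
  interpret Hgrp H by standard (use H_sub H_one H_mult H_inv in auto)
  have frob: "\<And>x y :: 'a. (x + y) ^ q = x ^ q + y ^ q" by (rule frob_char[OF q_pp card_F])
  show ?thesis unfolding K_free_def
  proof
    assume "\<exists>S U. S \<subseteq> G_vertices H \<and> U \<subseteq> G_vertices H \<and> S \<inter> U = {} \<and> finite S \<and> finite U \<and>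
       card S = 3 \<and> card U = 2 * t ^ 2 + 1 \<and> (\<forall>x\<in>S. \<forall>y\<in>U. G_adj H x y)"
    then obtain S U where SV: "S \<subseteq> G_vertices H" and UV: "U \<subseteq> G_vertices H"
      and cS: "card S = 3" and cU: "card U = 2 * t ^ 2 + 1" and ad: "\<forall>x\<in>S. \<forall>y\<in>U. G_adj H x y"
      by blast
    have "\<exists>x y z. S = {x, y, z} \<and> x \<noteq> y \<and> y \<noteq> z \<and> x \<noteq> z"
      using cS by (simp only: card_3_iff)
    then obtain s1 s2 s3 where S: "S = {s1, s2, s3}" "s1 \<noteq> s2" "s2 \<noteq> s3" "s1 \<noteq> s3"
      by blast
    have sv: "s1 \<in> G_vertices H" "s2 \<in> G_vertices H" "s3 \<in> G_vertices H" using SV S by auto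
    obtain p1 where p1: "p1 \<noteq> (0, 0)" "s1 = Hcls H p1" using vert[OF sv(1)] by blast
    obtain p2 where p2: "p2 \<noteq> (0, 0)" "s2 = Hcls H p2" using vert[OF sv(2)] by blast
    obtain p3 where p3: "p3 \<noteq> (0, 0)" "s3 = Hcls H p3" using vert[OF sv(3)] by blast
    define rep where "rep v = (SOME r. r \<noteq> (0, 0) \<and> v = Hcls H r)" for v
    have rep0: "rep v \<noteq> (0, 0) \<and> v = Hcls H (rep v)" if "v \<in> U" for v
    proof -
      have "v \<in> G_vertices H" using UV that by blast
      hence "\<exists>r. r \<noteq> (0, 0) \<and> v = Hcls H r" by (rule vert)
      then show ?thesis unfolding rep_def by (rule someI_ex)
    qed
    have rep: "Hcls H (rep v) = v" if "v \<in> U" for v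
      using conjunct2[OF rep0[OF that]] by (rule sym)
    have B: "bil p (rep v) \<in> H" if "s \<in> S" "s = Hcls H p" "v \<in> U" for s p v
    proof -
      have "G_adj H s v" using ad that by blast
      hence "G_adj H (Hcls H p) (Hcls H (rep v))" using that(2) rep[OF that(3)] by simp
      thus ?thesis using adj self by blast
    qed
    have "U \<noteq> {}" using cU by auto
    then obtain v0 where v0: "v0 \<in> U" by blast
    have d12: "fst p1 * snd p2 \<noteq> fst p2 * snd p1"
      by (rule indep[OF p1(1) _ B[OF _ p1(2) v0] B[OF _ p2(2) v0]]) (use S p1 p2 in auto)
    have d32: "fst p3 * snd p2 \<noteq> fst p2 * snd p3"
      by (rule indep[OF p3(1) _ B[OF _ p3(2) v0] B[OF _ p2(2) v0]]) (use S p3 p2 in auto)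
    have d13: "fst p1 * snd p3 \<noteq> fst p3 * snd p1"
      by (rule indep[OF p1(1) _ B[OF _ p1(2) v0] B[OF _ p3(2) v0]]) (use S p1 p3 in auto)
    define D where "D = fst p1 * snd p2 - fst p2 * snd p1"
    have D0: "D \<noteq> 0" using d12 by (simp add: D_def)
    define \<alpha> where "\<alpha> = (fst p3 * snd p2 - fst p2 * snd p3) / D"
    define \<beta> where "\<beta> = (fst p1 * snd p3 - fst p3 * snd p1) / D"
    have a0: "\<alpha> \<noteq> 0" using d32 D0 by (simp add: \<alpha>_def)
    have b0: "\<beta> \<noteq> 0" using d13 D0 by (simp add: \<beta>_def)
    have aD: "\<alpha> * D = fst p3 * snd p2 - fst p2 * snd p3" using D0 by (simp add: \<alpha>_def)
    have bD: "\<beta> * D = fst p1 * snd p3 - fst p3 * snd p1" using D0 by (simp add: \<beta>_def)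
    have lin: "bil p3 r = \<alpha> * bil p1 r + \<beta> * bil p2 r" for r
    proof -
      have "D * bil p3 r = (\<alpha> * D) * bil p1 r + (\<beta> * D) * bil p2 r"
        unfolding aD bD unfolding bil_def D_def by (simp add: algebra_simps)
      hence "D * bil p3 r = D * (\<alpha> * bil p1 r + \<beta> * bil p2 r)" by (simp add: algebra_simps)
      thus ?thesis using D0 by simp
    qed
    define f where "f v = bil p2 (rep v) / bil p1 (rep v)" for v
    have Bi: "bil p1 (rep v) \<in> H" "bil p2 (rep v) \<in> H" "bil p3 (rep v) \<in> H" if "v \<in> U" for v
      using B[OF _ p1(2) that] B[OF _ p2(2) that] B[OF _ p3(2) that] S by auto
    have injf: "inj_on f U"
    proof (rule inj_onI)
      fix v w assume v: "v \<in> U" and w: "w \<in> U" and e: "f v = f w"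
      have "rep w \<in> Hcls H (rep v)"
        by (rule inj[OF d12 Bi(1)[OF v] Bi(1)[OF w]]) (use e in \<open>simp add: f_def\<close>)
      hence "Hcls H (rep w) = Hcls H (rep v)" by (rule mem_Hcls)
      thus "v = w" using rep[OF v] rep[OF w] by simp
    qed
    have img: "f ` U \<subseteq> {h \<in> H. \<alpha> + \<beta> * h \<in> H}"
    proof
      fix h assume "h \<in> f ` U"
      then obtain v where v: "v \<in> U" and h: "h = f v" by blast
      have n: "bil p1 (rep v) \<noteq> 0" using H_nz Bi(1)[OF v] by blast
      have "h \<in> H" using h Bi[OF v] H_mult H_inv by (simp add: f_def divide_inverse)
      moreover have "\<alpha> + \<beta> * h = bil p3 (rep v) / bil p1 (rep v)"
        using n h by (simp add: f_def lin field_simps)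
      hence "\<alpha> + \<beta> * h \<in> H" using Bi[OF v] H_mult H_inv by (simp add: divide_inverse)
      ultimately show "h \<in> {h \<in> H. \<alpha> + \<beta> * h \<in> H}" by simp
    qed
    have "card U = card (f ` U)" using card_image[OF injf] by simp
    also have "\<dots> \<le> card {h \<in> H. \<alpha> + \<beta> * h \<in> H}" by (rule card_mono[OF _ img]) simp
    also have "\<dots> \<le> 2 * t ^ 2"
      by (rule count_bound[OF frob H_sub H_mult H_card t_pos a0 b0])
    finally show False using cU by simp
  qed
qed

end
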